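(* Consider the problem $\min_{w\in W}f(w)$, $f(w)=\mu(w)+\sum_{s\in N}\eta_s(w_{(s)})$, under the assumptions of the context, and additionally assume that the gradient $\mu'$ is uniformly continuous on $W$. Let Method (CPL) (described in the context) be applied with any $z^0\in W$, $\beta,\theta\in(0,1)$ and any sequence $\delta_l>0$ decreasing to $0$. Then: (i) for each outer iteration $l$, the number of inner iterations performed before the restart producing $z^l$ is finite; (ii) the sequence $\{z^l\}$ has limit points, every limit point of $\{z^l\}$ is a solution of $\min_{w\in W}f(w)$, and $\lim_{l\to\infty}f(z^l)=f^*$, where $f^*=\min_{w\in W}f(w)$.
   Context: Let $N=\{1,\dots,n\}$ and $\mathbb{R}^m=\prod_{s\in N}\mathbb{R}^{m_s}$, writing $w=(w_{(s)})_{s\in N}$. Let $W=\prod_{s\in N}W_s$ where each $W_s\subset\mathbb{R}^{m_s}$ is nonempty, convex and compact. Let $\mu:\mathbb{R}^m\to\mathbb{R}$ be convex and continuously differentiable, and each $\eta_s:\mathbb{R}^{m_s}\to\mathbb{R}$ convex; $\eta(w)=\sum_s\eta_s(w_{(s)})$, $f=\mu+\eta$. For $w\in W$ and $s\in N$ define $V_s(w)$ as the solution set of $\min_{v_{(s)}\in W_s}\{\langle v_{(s)},\partial\mu(w)/\partial w_{(s)}\rangle+\eta_s(v_{(s)})\}$ and the partial gap $$\varphi_s(w)=\max_{v_{(s)}\in W_s}\Big\{\Big\langle w_{(s)}-v_{(s)},\frac{\partial\mu(w)}{\partial w_{(s)}}\Big\rangle+\eta_s(w_{(s)})-\eta_s(v_{(s)})\Big\}.$$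 Method (CPL): Choose $z^0\in W$, $\beta,\theta\in(0,1)$, a sequence $\delta_l\searrow 0$; set $l=1$. Step 0: set $k=0$, $d=0$, $s=1$, $w^0=z^{l-1}$. Step 1: find $v_{(s)}\in V_s(w^k)$ and compute $\varphi_s(w^k)$. If $\varphi_s(w^k)\ge\delta_l$, define $p^k$ by $p^k_{(s)}=v_{(s)}-w^k_{(s)}$ and $p^k_{(i)}=0$ for $i\ne s$, and go to Step 4. Step 2: set $d=d+1$. If $d=n$ (i.e. $n$ consecutive components have been checked with gap below $\delta_l$), set $z^l=w^k$, $l=l+1$ and go to Step 0 (restart). Step 3: set $s=1$ if $s=n$, else $s=s+1$; go to Step 1. Step 4: let $j$ be the smallest nonnegative integer with $f(w^k+\theta^jp^k)\le f(w^k)-\beta\theta^j\varphi_s(w^k)$; set $\lambda_k=\theta^j$, $w^{k+1}=w^k+\lambda_kp^k$, $k=k+1$, $d=0$; set $s=1$ if $s=n$, else $s=s+1$; go to Step 1. *)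

theory Defs
  imports "HOL-Analysis.Analysis"
begin

text \<open>The space R^m is modelled as real^'m; its coordinates are partitioned into the
  blocks 1..n by a map blk. The block s component w_(s) is identified with the vector
  bproj blk s w, which agrees with w on the coordinates of block s and is zero elsewhere;
  R^{m_s} is identified with the subspace bsub blk s.\<close>

definition bproj :: "('m::finite \<Rightarrow> nat) \<Rightarrow> nat \<Rightarrow> real^'m \<Rightarrow> real^'m" where
  "bproj blk s w = (\<chi> i. if blk i = s then w $ i else 0)"

definition bsub :: "('m::finite \<Rightarrow> nat) \<Rightarrow> nat \<Rightarrow> (real^'m) set" where
  "bsub blk s = {x. \<forall>i. blk i \<noteq> s \<longrightarrow> x $ i = 0}"

definition prodset :: "('m::finite \<Rightarrow> nat) \<Rightarrow> nat \<Rightarrow> (nat \<Rightarrow> (real^'m) set) \<Rightarrow> (real^'m) set" where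
  "prodset blk n Wb = {w. \<forall>s\<in>{1..n}. bproj blk s w \<in> Wb s}"

definition fobj :: "(real^'m \<Rightarrow> real) \<Rightarrow> (nat \<Rightarrow> real^'m \<Rightarrow> real) \<Rightarrow> ('m::finite \<Rightarrow> nat) \<Rightarrow> nat
    \<Rightarrow> real^'m \<Rightarrow> real" where
  "fobj mu eta blk n w = mu w + (\<Sum>s=1..n. eta s (bproj blk s w))"

definition Vset :: "('m::finite \<Rightarrow> nat) \<Rightarrow> (nat \<Rightarrow> (real^'m) set) \<Rightarrow> (real^'m \<Rightarrow> real^'m)
    \<Rightarrow> (nat \<Rightarrow> real^'m \<Rightarrow> real) \<Rightarrow> nat \<Rightarrow> real^'m \<Rightarrow> (real^'m) set" where
  "Vset blk Wb mu' eta s w =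
     {v \<in> Wb s. \<forall>u \<in> Wb s. inner v (bproj blk s (mu' w)) + eta s v
                            \<le> inner u (bproj blk s (mu' w)) + eta s u}"

text \<open>partial gap phi_s(w) (the max is attained; written as a supremum)\<close>
definition gap :: "('m::finite \<Rightarrow> nat) \<Rightarrow> (nat \<Rightarrow> (real^'m) set) \<Rightarrow> (real^'m \<Rightarrow> real^'m)
    \<Rightarrow> (nat \<Rightarrow> real^'m \<Rightarrow> real) \<Rightarrow> nat \<Rightarrow> real^'m \<Rightarrow> real" where
  "gap blk Wb mu' eta s w =
     (SUP v \<in> Wb s. inner (bproj blk s w - v) (bproj blk s (mu' w))
                     + eta s (bproj blk s w) - eta s v)"

definition nxt :: "nat \<Rightarrow> nat \<Rightarrow> nat" where
  "nxt n s = (if s = n then 1 else s + 1)"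

text \<open>One execution of Step 1 of (CPL) together with the subsequent Step 2/3 or Step 4
  (and, on restart, Step 0). A state is (l, w, s, d): outer index l, current point w^k,
  current block s, counter d. The only freedom is the choice of v in V_s(w).\<close>
definition cpl_step ::
  "(real^'m \<Rightarrow> real) \<Rightarrow> (real^'m \<Rightarrow> real^'m) \<Rightarrow> (nat \<Rightarrow> real^'m \<Rightarrow> real) \<Rightarrow> ('m::finite \<Rightarrow> nat)
   \<Rightarrow> nat \<Rightarrow> (nat \<Rightarrow> (real^'m) set) \<Rightarrow> real \<Rightarrow> real \<Rightarrow> (nat \<Rightarrow> real)
   \<Rightarrow> nat \<times> (real^'m) \<times> nat \<times> nat \<Rightarrow> nat \<times> (real^'m) \<times> nat \<times> nat \<Rightarrow> bool" where
  "cpl_step mu mu' eta blk n Wb \<beta> \<theta> \<delta> \<sigma> \<sigma>' =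
    (case \<sigma> of (l, w, s, d) \<Rightarrow>
      (\<exists>v \<in> Vset blk Wb mu' eta s w.
        (let \<phi> = gap blk Wb mu' eta s w; f = fobj mu eta blk n in
         if \<phi> \<ge> \<delta> l then
           (let p = v - bproj blk s w;
                j = (LEAST j::nat. f (w + (\<theta> ^ j) *\<^sub>R p) \<le> f w - \<beta> * \<theta> ^ j * \<phi>)
            in \<sigma>' = (l, w + (\<theta> ^ j) *\<^sub>R p, nxt n s, 0))
         else if d + 1 = n then \<sigma>' = (l + 1, w, 1, 0)
         else \<sigma>' = (l, w, nxt n s, d + 1))))"

text \<open>z^l: the point at which outer iteration l+1 starts (z^0 is the initial point).\<close>
definition cpl_z :: "(nat \<Rightarrow> nat \<times> (real^'m) \<times> nat \<times> nat) \<Rightarrow> nat \<Rightarrow> real^'m" where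
  "cpl_z st l = fst (snd (st (LEAST t. fst (st t) = Suc l)))"

end

theory Submission
  imports Defs "HOL-Analysis.Analysis"
begin


definition idx :: "nat \<Rightarrow> nat \<Rightarrow> nat \<Rightarrow> nat" where "idx n s k = ((s - 1 + n - k) mod n) + 1"

lemma modhelp: fixes a n :: nat assumes "1 \<le> a" "a \<le> n" shows "(a - 1 + n) mod n + 1 = a"
proof -
  obtain b where b: "a = Suc b" using assms by (cases a) auto
  have "(b + n) mod n = b" using assms b by simp
  then show ?thesis using b by simp
qed

lemma idx0: "s \<in> {1..n} \<Longrightarrow> idx n s 0 = s"
  unfolding idx_def using modhelp[of s n] by auto

lemma idx_nxt: assumes "s \<in> {1..n}" "1 \<le> k" "k \<le> n" shows "idx n (nxt n s) k = idx n s (k - 1)"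
proof (cases "s = n")
  case True
  then have "idx n (nxt n s) k = (n - k) mod n + 1" by (simp add: idx_def nxt_def)
  moreover have "idx n s (k - 1) = (n + (n - k)) mod n + 1" using True assms
    by (simp add: idx_def)
  ultimately show ?thesis by simp
next
  case False
  then show ?thesis using assms by (simp add: idx_def nxt_def) 
qed

lemma idx_cover: assumes "s \<in> {1..n}" "r \<in> {1..n}" shows "\<exists>k<n. idx n s k = r"
proof (cases "r \<le> s")
  case True
  have "s - 1 + n - (s - r) = (r - 1) + n" using assms True by simp
  then have "idx n s (s - r) = ((r - 1) + n) mod n + 1" by (simp add: idx_def)
  also have "\<dots> = r" using assms modhelp[of r n] by simp
  finally show ?thesis using assms True by (intro exI[of _ "s - r"]) auto
next
  case False
  have "idx n s (s + n - r) = r" using assms False by (simp add: idx_def)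
  then show ?thesis using assms False by (intro exI[of _ "s + n - r"]) auto
qed

lemma bproj_add: "bproj blk s (a + b) = bproj blk s a + bproj blk s b"
  by (simp add: bproj_def vec_eq_iff)
lemma bproj_diff: "bproj blk s (a - b) = bproj blk s a - bproj blk s b"
  by (simp add: bproj_def vec_eq_iff)
lemma bproj_scale: "bproj blk s (c *\<^sub>R a) = c *\<^sub>R bproj blk s a"
  by (simp add: bproj_def vec_eq_iff)
lemma bproj_in: "bproj blk s w \<in> bsub blk s"
  by (simp add: bproj_def bsub_def)
lemma bproj_id: "x \<in> bsub blk s \<Longrightarrow> bproj blk s x = x"
  by (simp add: bproj_def bsub_def vec_eq_iff)
lemma bproj_other: "x \<in> bsub blk s' \<Longrightarrow> s \<noteq> s' \<Longrightarrow> bproj blk s x = 0"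
  by (auto simp add: bproj_def bsub_def vec_eq_iff)
lemma bsub_diff: "x \<in> bsub blk s \<Longrightarrow> y \<in> bsub blk s \<Longrightarrow> x - y \<in> bsub blk s"
  by (simp add: bsub_def)
lemma inner_bsub: "p \<in> bsub blk s \<Longrightarrow> inner a p = inner (bproj blk s a) p"
  by (auto simp: inner_vec_def bsub_def bproj_def intro!: sum.cong)

lemma inner_blocks:
  assumes "\<forall>i. blk i \<in> {1..n}"
  shows "inner a b = (\<Sum>s=1..n. inner (bproj blk s a) (bproj blk s b))"
proof -
  have "(\<Sum>s=1..n. inner (bproj blk s a) (bproj blk s b))
      = (\<Sum>s=1..n. \<Sum>i\<in>UNIV. if blk i = s then a $ i * b $ i else 0)"
    by (auto simp: inner_vec_def bproj_def intro!: sum.cong)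
  also have "\<dots> = (\<Sum>i\<in>UNIV. \<Sum>s=1..n. if blk i = s then a $ i * b $ i else 0)"
    by (rule sum.swap)
  also have "\<dots> = (\<Sum>i\<in>UNIV. a $ i * b $ i)"
    using assms by (auto intro!: sum.cong simp: sum.delta)
  finally show ?thesis by (simp add: inner_vec_def)
qed

lemma vec_blocks:
  assumes "\<forall>i. blk i \<in> {1..n}"
  shows "w = (\<Sum>s=1..n. bproj blk s w)"
  using assms by (auto simp: vec_eq_iff bproj_def sum_component if_distrib sum.delta cong: if_cong)

locale cpl =
  fixes mu :: "real^'m::finite \<Rightarrow> real" and mu' :: "real^'m \<Rightarrow> real^'m"
    and eta :: "nat \<Rightarrow> real^'m \<Rightarrow> real" and blk :: "'m \<Rightarrow> nat" and n :: nat
    and Wb :: "nat \<Rightarrow> (real^'m) set" and \<beta> \<theta> :: real and \<delta> :: "nat \<Rightarrow> real"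
  assumes blk: "\<forall>i. blk i \<in> {1..n}"
    and Wb: "\<forall>s\<in>{1..n}. Wb s \<noteq> {} \<and> convex (Wb s) \<and> compact (Wb s) \<and> Wb s \<subseteq> bsub blk s"
    and mu_convex: "convex_on UNIV mu"
    and mu_grad: "\<forall>w. (mu has_derivative (\<lambda>h. inner (mu' w) h)) (at w)"
    and mu'_unif: "uniformly_continuous_on (prodset blk n Wb) mu'"
    and eta_convex: "\<forall>s\<in>{1..n}. convex_on (bsub blk s) (eta s)"
    and \<beta>: "0 < \<beta>" "\<beta> < 1" and \<theta>: "0 < \<theta>" "\<theta> < 1"
begin

abbreviation "W \<equiv> prodset blk n Wb"
abbreviation "f \<equiv> fobj mu eta blk n"
abbreviation "bp \<equiv> bproj blk"

lemma grad_ineq: "mu y \<ge> mu x + inner (mu' x) (y - x)"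
proof -
  define h where "h = (\<lambda>t::real. mu (x + t *\<^sub>R (y - x)))"
  have hc: "convex_on UNIV h"
  proof (rule convex_onI)
    fix t a b :: real assume "0 < t" "t < 1"
    have "x + ((1 - t) * a + t * b) *\<^sub>R (y - x) = (1 - t) *\<^sub>R (x + a *\<^sub>R (y - x)) + t *\<^sub>R (x + b *\<^sub>R (y - x))"
      by (simp add: algebra_simps)
    then show "h ((1 - t) *\<^sub>R a + t *\<^sub>R b) \<le> (1 - t) * h a + t * h b"
      unfolding h_def using convex_onD[OF mu_convex, of t] \<open>0<t\<close> \<open>t<1\<close> by simp
  qed simp
  have "((\<lambda>t. x + t *\<^sub>R (y - x)) has_derivative (\<lambda>t. t *\<^sub>R (y - x))) (at 0)"
    by (auto intro!: derivative_eq_intros)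
  from has_derivative_compose[OF this mu_grad[rule_format]]
  have "(h has_derivative (\<lambda>t. t * inner (mu' x) (y - x))) (at 0)"
    unfolding h_def by (simp add: o_def inner_scaleR_right)
  then have "(h has_field_derivative inner (mu' x) (y - x)) (at 0 within UNIV)"
    by (simp add: has_field_derivative_def mult.commute[of _ "inner (mu' x) (y - x)"])
  from convex_on_imp_above_tangent[OF hc _ _ _ this, of 1]
  show ?thesis by (simp add: h_def)
qed

lemma eta_comp_convex: "s \<in> {1..n} \<Longrightarrow> convex_on UNIV (\<lambda>w. eta s (bp s w))"
proof (rule convex_onI)
  fix t x y assume s: "s \<in> {1..n}" and "0 < (t::real)" "t < 1"
  show "eta s (bp s ((1 - t) *\<^sub>R x + t *\<^sub>R y)) \<le> (1 - t) * eta s (bp s x) + t * eta s (bp s y)"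
    using convex_onD[OF eta_convex[rule_format, OF s], of t "bp s x" "bp s y"] \<open>0<t\<close> \<open>t<1\<close>
    by (simp add: bproj_add bproj_scale bproj_in)
qed simp

lemma mu_cont: "continuous_on UNIV mu"
  using mu_grad has_derivative_continuous continuous_at_imp_continuous_on by blast

lemma f_cont: "continuous_on UNIV f"
proof -
  have "continuous_on UNIV (\<lambda>w. eta s (bp s w))" if "s \<in> {1..n}" for s
    by (rule convex_on_continuous[OF open_UNIV eta_comp_convex[OF that]])
  then have "continuous_on UNIV (\<lambda>w. \<Sum>s=1..n. eta s (bp s w))"
    by (intro continuous_on_sum) auto
  then show ?thesis unfolding fobj_def[abs_def] by (intro continuous_on_add mu_cont)
qed

lemma W_closed: "closed W"
proof -
  have "W = (\<Inter>s\<in>{1..n}. bp s -` Wb s)" by (auto simp: prodset_def)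
  moreover have "closed (bp s -` Wb s)" if "s \<in> {1..n}" for s
  proof -
    have "continuous_on UNIV (bp s)" unfolding bproj_def
      apply (intro continuous_on_vec_lambda)
      subgoal for i by (cases "blk i = s") (simp_all add: continuous_on_component)
      done
    then show ?thesis using Wb that compact_imp_closed
      by (metis closed_vimage)
  qed
  ultimately show ?thesis by auto
qed

lemma W_bounded: "bounded W"
proof -
  have "\<exists>B. \<forall>x\<in>Wb s. norm x \<le> B" if "s \<in> {1..n}" for s
    using Wb that compact_imp_bounded bounded_iff by metis
  then obtain B where B: "\<And>s x. s \<in> {1..n} \<Longrightarrow> x \<in> Wb s \<Longrightarrow> norm x \<le> B s" by metis
  have "norm w \<le> (\<Sum>s=1..n. B s)" if "w \<in> W" for w
  proof -
    have "norm w = norm (\<Sum>s=1..n. bp s w)" using vec_blocks[OF blk] by metis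
    also have "\<dots> \<le> (\<Sum>s=1..n. norm (bp s w))" by (rule norm_sum)
    also have "\<dots> \<le> (\<Sum>s=1..n. B s)" using that B by (intro sum_mono) (auto simp: prodset_def)
    finally show ?thesis .
  qed
  then show ?thesis unfolding bounded_iff by blast
qed

lemma W_compact: "compact W"
  using W_closed W_bounded compact_eq_bounded_closed by blast


lemma W_step:
  assumes w: "w \<in> W" and s: "s \<in> {1..n}" and v: "v \<in> Wb s" and t: "0 \<le> t" "t \<le> 1"
  shows "w + t *\<^sub>R (v - bp s w) \<in> W"
  unfolding prodset_def
proof safe
  fix s' assume s': "s' \<in> {1..n}"
  have vb: "v \<in> bsub blk s" using Wb s v by auto
  have pb: "v - bp s w \<in> bsub blk s" by (intro bsub_diff vb bproj_in)
  show "bp s' (w + t *\<^sub>R (v - bp s w)) \<in> Wb s'"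
  proof (cases "s' = s")
    case True
    have "bp s' (w + t *\<^sub>R (v - bp s w)) = bp s w + t *\<^sub>R (v - bp s w)"
      using True by (simp only: bproj_add bproj_scale bproj_id[OF pb])
    also have "\<dots> = (1 - t) *\<^sub>R bp s w + t *\<^sub>R v" by (simp add: algebra_simps)
    also have "\<dots> \<in> Wb s" using Wb s w v t
      by (intro convexD) (auto simp: prodset_def)
    finally show ?thesis using True by simp
  next
    case False
    then have "bp s' (w + t *\<^sub>R (v - bp s w)) = bp s' w"
      using pb by (simp add: bproj_add bproj_scale bproj_other)
    then show ?thesis using w s' by (simp add: prodset_def)
  qed
qed

lemma W_nonneg_norm: "\<exists>R>0. \<forall>x\<in>W. norm x \<le> R"
  using W_bounded bounded_pos by blast

lemma eta_eq: "s \<in> {1..n} \<Longrightarrow> u \<in> Wb s \<Longrightarrow> eta s u = eta s (bp s u)"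
  using Wb bproj_id by (metis subsetD)

lemma Vset_ne:
  assumes s: "s \<in> {1..n}"
  shows "Vset blk Wb mu' eta s w \<noteq> {}"
proof -
  let ?c = "bp s (mu' w)"
  have "continuous_on UNIV (\<lambda>u. inner u ?c + eta s (bp s u))"
    by (intro continuous_on_add continuous_intros convex_on_continuous[OF open_UNIV eta_comp_convex[OF s]])
  then have "continuous_on (Wb s) (\<lambda>u. inner u ?c + eta s (bp s u))"
    by (rule continuous_on_subset) simp
  then have "continuous_on (Wb s) (\<lambda>u. inner u ?c + eta s u)"
    by (rule continuous_on_cong[THEN iffD1, rotated 2]) (auto simp: eta_eq[OF s])
  from continuous_attains_inf[OF _ _ this] Wb s obtain v where "v \<in> Wb s"
    "\<forall>u\<in>Wb s. inner v ?c + eta s v \<le> inner u ?c + eta s u" by auto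
  then show ?thesis unfolding Vset_def by auto
qed

definition "val s w u = inner (bp s w - u) (bp s (mu' w)) + eta s (bp s w) - eta s u"

lemma gap_val:
  assumes s: "s \<in> {1..n}" and v: "v \<in> Vset blk Wb mu' eta s w"
  shows "gap blk Wb mu' eta s w = val s w v" "\<And>u. u \<in> Wb s \<Longrightarrow> val s w u \<le> gap blk Wb mu' eta s w"
proof -
  have vW: "v \<in> Wb s" using v by (simp add: Vset_def)
  have le: "val s w u \<le> val s w v" if "u \<in> Wb s" for u
    using v that unfolding Vset_def val_def by (auto simp: inner_diff_left)
  have "gap blk Wb mu' eta s w = Sup (val s w ` Wb s)"
    unfolding gap_def val_def by simp
  also have "\<dots> = val s w v" using vW le by (intro cSup_eq_maximum) auto
  finally show g: "gap blk Wb mu' eta s w = val s w v" .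
  show "\<And>u. u \<in> Wb s \<Longrightarrow> val s w u \<le> gap blk Wb mu' eta s w" using g le by simp
qed

lemma sum_gap:
  assumes w: "w \<in> W" and y: "y \<in> W"
  shows "f w - f y \<le> (\<Sum>s=1..n. gap blk Wb mu' eta s w)"
proof -
  have "f w - f y = mu w - mu y + (\<Sum>s=1..n. eta s (bp s w) - eta s (bp s y))"
    by (simp add: fobj_def sum_subtractf)
  also have "\<dots> \<le> inner (mu' w) (w - y) + (\<Sum>s=1..n. eta s (bp s w) - eta s (bp s y))"
    using grad_ineq[of w y] by (simp add: inner_diff_right)
  also have "inner (mu' w) (w - y) = (\<Sum>s=1..n. inner (bp s w - bp s y) (bp s (mu' w)))"
    by (subst inner_blocks[OF blk]) (simp add: bproj_diff inner_commute)
  also have "(\<Sum>s=1..n. inner (bp s w - bp s y) (bp s (mu' w))) + (\<Sum>s=1..n. eta s (bp s w) - eta s (bp s y))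
      = (\<Sum>s=1..n. val s w (bp s y))"
    by (simp add: val_def sum.distrib[symmetric] algebra_simps)
  also have "\<dots> \<le> (\<Sum>s=1..n. gap blk Wb mu' eta s w)"
  proof (rule sum_mono)
    fix s assume s: "s \<in> {1..n}"
    from Vset_ne[OF s] obtain v where "v \<in> Vset blk Wb mu' eta s w" by auto
    from gap_val(2)[OF s this] y s show "val s w (bp s y) \<le> gap blk Wb mu' eta s w"
      by (auto simp: prodset_def)
  qed
  finally show ?thesis .
qed


lemma armijo:
  assumes d0: "0 < d0"
  shows "\<exists>t1>0. \<forall>w\<in>W. \<forall>s\<in>{1..n}. \<forall>v\<in>Vset blk Wb mu' eta s w. \<forall>t.
     0 < t \<and> t \<le> 1 \<and> t < t1 \<and> d0 \<le> gap blk Wb mu' eta s w \<longrightarrow>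
     f (w + t *\<^sub>R (v - bp s w)) \<le> f w - \<beta> * t * gap blk Wb mu' eta s w"
proof -
  obtain R where R: "R > 0" "\<forall>x\<in>W. norm x \<le> R" using W_nonneg_norm by blast
  define D where "D = 2 * R + 1"
  have D: "D > 0" using R by (simp add: D_def)
  define e where "e = (1 - \<beta>) * d0 / D"
  have e: "e > 0" using \<beta> d0 D by (simp add: e_def)
  from mu'_unif[unfolded uniformly_continuous_on_def, rule_format, OF e]
  obtain d where d: "d > 0" "\<forall>x\<in>W. \<forall>x'\<in>W. dist x' x < d \<longrightarrow> dist (mu' x') (mu' x) < e" by blast
  show ?thesis
  proof (intro exI[of _ "d / D"] conjI ballI allI impI)
    show "0 < d / D" using d D by simp
    fix w s v t assume w: "w \<in> W" and s: "s \<in> {1..n}" and v: "v \<in> Vset blk Wb mu' eta s w"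
      and t: "0 < t \<and> t \<le> 1 \<and> t < d / D \<and> d0 \<le> gap blk Wb mu' eta s w"
    define p where "p = v - bp s w"
    define g where "g = gap blk Wb mu' eta s w"
    have vW: "v \<in> Wb s" using v by (simp add: Vset_def)
    have vb: "v \<in> bsub blk s" using Wb s vW by auto
    have pb: "p \<in> bsub blk s" unfolding p_def by (intro bsub_diff vb bproj_in)
    have w1: "w + p \<in> W" using W_step[OF w s vW, of 1] by (simp add: p_def)
    have wt: "w + t *\<^sub>R p \<in> W" using W_step[OF w s vW, of t] t by (simp add: p_def)
    have np: "norm p \<le> 2 * R"
    proof -
      have "norm p = norm ((w + p) - w)" by simp
      also have "\<dots> \<le> norm (w + p) + norm w" by (rule norm_triangle_ineq4)
      also have "\<dots> \<le> 2 * R" using R(2) w1 w by (smt (verit))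
      finally show ?thesis .
    qed
    have npD: "norm p \<le> D" using np by (simp add: D_def)
    have "dist (w + t *\<^sub>R p) w = t * norm p" using t by (simp add: dist_norm)
    also have "\<dots> \<le> t * D" using npD t by (simp add: mult_left_mono)
    also have "\<dots> < d" using t D by (simp add: pos_less_divide_eq)
    finally have "dist (mu' (w + t *\<^sub>R p)) (mu' w) < e" using d wt w by blast
    then have nm: "norm (mu' (w + t *\<^sub>R p) - mu' w) \<le> e" by (simp add: dist_norm)
    have "inner (mu' (w + t *\<^sub>R p) - mu' w) p \<le> norm (mu' (w + t *\<^sub>R p) - mu' w) * norm p"
      by (rule norm_cauchy_schwarz)
    also have "\<dots> \<le> e * D" using nm npD e by (intro mult_mono) auto
    also have "\<dots> = (1 - \<beta>) * d0" using D by (simp add: e_def)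
    finally have ip: "inner (mu' (w + t *\<^sub>R p) - mu' w) p \<le> (1 - \<beta>) * d0" .
    have mu_le: "mu (w + t *\<^sub>R p) - mu w \<le> t * inner (mu' w) p + t * ((1 - \<beta>) * d0)"
    proof -
      have "mu (w + t *\<^sub>R p) - mu w \<le> inner (mu' (w + t *\<^sub>R p)) (t *\<^sub>R p)"
        using grad_ineq[of "w + t *\<^sub>R p" w] by (simp add: inner_minus_right)
      also have "\<dots> = t * inner (mu' w) p + t * inner (mu' (w + t *\<^sub>R p) - mu' w) p"
        by (simp add: inner_diff_left algebra_simps)
      also have "\<dots> \<le> t * inner (mu' w) p + t * ((1 - \<beta>) * d0)"
        using ip t by (simp add: mult_left_mono)
      finally show ?thesis .
    qed
    have bps: "bp s (w + t *\<^sub>R p) = (1 - t) *\<^sub>R bp s w + t *\<^sub>R v"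
    proof -
      have "bp s (w + t *\<^sub>R p) = bp s w + t *\<^sub>R p"
        by (simp only: bproj_add bproj_scale bproj_id[OF pb])
      then show ?thesis by (simp add: p_def algebra_simps)
    qed
    have eta_le: "eta s (bp s (w + t *\<^sub>R p)) \<le> (1 - t) * eta s (bp s w) + t * eta s v"
      unfolding bps using convex_onD[OF eta_convex[rule_format, OF s], of t "bp s w" v] t vb
      by (simp add: bproj_in)
    have oth: "bp s' (w + t *\<^sub>R p) = bp s' w" if "s' \<noteq> s" for s'
      using that pb by (simp add: bproj_add bproj_scale bproj_other)
    have "(\<Sum>s'=1..n. eta s' (bp s' (w + t *\<^sub>R p)) - eta s' (bp s' w))
        = (\<Sum>s'=1..n. if s' = s then eta s (bp s (w + t *\<^sub>R p)) - eta s (bp s w) else 0)"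
      by (intro sum.cong) (auto simp: oth)
    also have "\<dots> = eta s (bp s (w + t *\<^sub>R p)) - eta s (bp s w)" using s by simp
    finally have sumeq: "(\<Sum>s'=1..n. eta s' (bp s' (w + t *\<^sub>R p))) - (\<Sum>s'=1..n. eta s' (bp s' w))
        = eta s (bp s (w + t *\<^sub>R p)) - eta s (bp s w)" by (simp add: sum_subtractf)
    have gv: "g = - inner p (bp s (mu' w)) + eta s (bp s w) - eta s v"
      using gap_val(1)[OF s v] by (simp add: g_def val_def p_def inner_diff_left)
    have ip2: "inner (mu' w) p = inner p (bp s (mu' w))"
      using inner_bsub[OF pb, of "mu' w"] by (simp add: inner_commute)
    have "f (w + t *\<^sub>R p) - f w = (mu (w + t *\<^sub>R p) - mu w) + (eta s (bp s (w + t *\<^sub>R p)) - eta s (bp s w))"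
      using sumeq by (simp add: fobj_def)
    also have "\<dots> \<le> t * inner (mu' w) p + t * ((1 - \<beta>) * d0) + (t * eta s v - t * eta s (bp s w))"
      using mu_le eta_le by (simp add: algebra_simps)
    also have "\<dots> = - t * g + t * ((1 - \<beta>) * d0)"
      unfolding gv ip2 by (simp add: algebra_simps)
    also have "\<dots> \<le> - t * g + t * ((1 - \<beta>) * g)"
      using t \<beta> by (simp add: g_def mult_left_mono)
    also have "\<dots> = - \<beta> * t * g" by (simp add: algebra_simps)
    finally show "f (w + t *\<^sub>R (v - bp s w)) \<le> f w - \<beta> * t * gap blk Wb mu' eta s w"
      by (simp add: p_def g_def)
  qed
qed


lemma armijo_J:
  assumes d0: "0 < d0"
  shows "\<exists>J. \<forall>w\<in>W. \<forall>s\<in>{1..n}. \<forall>v\<in>Vset blk Wb mu' eta s w.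
     d0 \<le> gap blk Wb mu' eta s w \<longrightarrow>
     f (w + (\<theta> ^ J) *\<^sub>R (v - bp s w)) \<le> f w - \<beta> * \<theta> ^ J * gap blk Wb mu' eta s w"
proof -
  obtain t1 where t1: "t1 > 0" and H: "\<forall>w\<in>W. \<forall>s\<in>{1..n}. \<forall>v\<in>Vset blk Wb mu' eta s w. \<forall>t.
     0 < t \<and> t \<le> 1 \<and> t < t1 \<and> d0 \<le> gap blk Wb mu' eta s w \<longrightarrow>
     f (w + t *\<^sub>R (v - bp s w)) \<le> f w - \<beta> * t * gap blk Wb mu' eta s w"
    using armijo[OF d0] by blast
  obtain J where J: "\<theta> ^ J < t1" using real_arch_pow_inv[OF t1 \<theta>(2)] by blast
  have "0 < \<theta> ^ J" "\<theta> ^ J \<le> 1" using \<theta> by (auto simp: power_le_one)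
  then show ?thesis using H J by (intro exI[of _ J]) blast
qed

definition "AJ d0 J \<longleftrightarrow> (\<forall>w\<in>W. \<forall>s\<in>{1..n}. \<forall>v\<in>Vset blk Wb mu' eta s w.
     d0 \<le> gap blk Wb mu' eta s w \<longrightarrow>
     f (w + (\<theta> ^ J) *\<^sub>R (v - bp s w)) \<le> f w - \<beta> * \<theta> ^ J * gap blk Wb mu' eta s w)"

definition "Jf d0 = (SOME J. AJ d0 J)"

lemma Jf: "0 < d0 \<Longrightarrow> AJ d0 (Jf d0)"
  unfolding Jf_def by (rule someI_ex) (use armijo_J in \<open>auto simp: AJ_def\<close>)

end

locale cpl_run = cpl mu mu' eta blk n Wb \<beta> \<theta> \<delta>
  for mu :: "real^'m::finite \<Rightarrow> real" and mu' :: "real^'m \<Rightarrow> real^'m"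
    and eta :: "nat \<Rightarrow> real^'m \<Rightarrow> real" and blk :: "'m \<Rightarrow> nat" and n :: nat
    and Wb :: "nat \<Rightarrow> (real^'m) set" and \<beta> \<theta> :: real and \<delta> :: "nat \<Rightarrow> real" +
  fixes z0 :: "real^'m" and st :: "nat \<Rightarrow> nat \<times> (real^'m) \<times> nat \<times> nat"
  assumes z0: "z0 \<in> prodset blk n Wb"
    and \<delta>: "\<forall>l. 0 < \<delta> l" "decseq \<delta>" "\<delta> \<longlonglongrightarrow> 0"
    and run0: "st 0 = (1, z0, 1, 0)"
    and run: "\<forall>t. cpl_step mu mu' eta blk n Wb \<beta> \<theta> \<delta> (st t) (st (Suc t))"
begin

abbreviation "Lt t \<equiv> fst (st t)"
abbreviation "wt t \<equiv> fst (snd (st t))"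
abbreviation "st_s t \<equiv> fst (snd (snd (st t)))"
abbreviation "dt t \<equiv> snd (snd (snd (st t)))"
abbreviation "gp \<equiv> gap blk Wb mu' eta"
abbreviation "cc l \<equiv> \<beta> * \<theta> ^ (Jf (\<delta> l)) * \<delta> l"

lemma step:
  assumes wW: "wt t \<in> W" and sN: "st_s t \<in> {1..n}"
  shows "(\<delta> (Lt t) \<le> gp (st_s t) (wt t) \<and> Lt (Suc t) = Lt t \<and> wt (Suc t) \<in> W
            \<and> f (wt (Suc t)) \<le> f (wt t) - cc (Lt t) \<and> st_s (Suc t) = nxt n (st_s t) \<and> dt (Suc t) = 0)
       \<or> (gp (st_s t) (wt t) < \<delta> (Lt t) \<and> dt t + 1 = n \<and> Lt (Suc t) = Suc (Lt t) \<and> wt (Suc t) = wt t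
            \<and> st_s (Suc t) = 1 \<and> dt (Suc t) = 0)
       \<or> (gp (st_s t) (wt t) < \<delta> (Lt t) \<and> dt t + 1 \<noteq> n \<and> Lt (Suc t) = Lt t \<and> wt (Suc t) = wt t
            \<and> st_s (Suc t) = nxt n (st_s t) \<and> dt (Suc t) = Suc (dt t))"
proof -
  obtain l x s dd where e: "st t = (l, x, s, dd)" by (cases "st t") auto
  have R: "cpl_step mu mu' eta blk n Wb \<beta> \<theta> \<delta> (l, x, s, dd) (st (Suc t))"
    using run e by metis
  obtain v where v: "v \<in> Vset blk Wb mu' eta s x" and
    H: "if \<delta> l \<le> gp s x then
          st (Suc t) = (l, x + (\<theta> ^ (LEAST j. f (x + (\<theta> ^ j) *\<^sub>R (v - bp s x)) \<le> f x - \<beta> * \<theta> ^ j * gp s x))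
                 *\<^sub>R (v - bp s x), nxt n s, 0)
        else if dd + 1 = n then st (Suc t) = (l + 1, x, 1, 0) else st (Suc t) = (l, x, nxt n s, dd + 1)"
    using R unfolding cpl_step_def Let_def prod.case by blast
  have xW: "x \<in> W" and sN': "s \<in> {1..n}" using wW sN e by auto
  show ?thesis
  proof (cases "\<delta> l \<le> gp s x")
    case True
    define P where "P = (\<lambda>j. f (x + (\<theta> ^ j) *\<^sub>R (v - bp s x)) \<le> f x - \<beta> * \<theta> ^ j * gp s x)"
    define j where "j = (LEAST j. P j)"
    have st1: "st (Suc t) = (l, x + (\<theta> ^ j) *\<^sub>R (v - bp s x), nxt n s, 0)"
      using H True by (simp add: j_def P_def)
    have dl: "0 < \<delta> l" using \<delta> by auto
    have PJ: "P (Jf (\<delta> l))" using Jf[OF dl] xW sN' v True unfolding AJ_def P_def by blast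
    have Pj: "P j" unfolding j_def by (rule LeastI[of P, OF PJ])
    have jJ: "j \<le> Jf (\<delta> l)" unfolding j_def by (rule Least_le[of P, OF PJ])
    have pw: "\<theta> ^ Jf (\<delta> l) \<le> \<theta> ^ j" using jJ \<theta> by (simp add: power_decreasing)
    have "\<beta> * \<theta> ^ Jf (\<delta> l) * \<delta> l \<le> \<beta> * \<theta> ^ j * gp s x"
      using pw True \<beta> \<theta> dl by (intro mult_mono) auto
    then have fd: "f (x + (\<theta> ^ j) *\<^sub>R (v - bp s x)) \<le> f x - cc l" using Pj P_def by simp
    have vW: "v \<in> Wb s" using v by (simp add: Vset_def)
    have "x + (\<theta> ^ j) *\<^sub>R (v - bp s x) \<in> W"
      using \<theta> by (intro W_step[OF xW sN' vW]) (auto simp: power_le_one)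
    then show ?thesis using st1 fd e True by simp
  next
    case False
    then show ?thesis using H e by (cases "dd + 1 = n") auto
  qed
qed


lemma n_pos: "1 \<le> n"
  using blk by auto

lemma nxt_in: "s \<in> {1..n} \<Longrightarrow> nxt n s \<in> {1..n}"
  by (auto simp: nxt_def)

lemma inv: "Lt t \<ge> 1 \<and> wt t \<in> W \<and> st_s t \<in> {1..n} \<and> dt t < n
   \<and> (\<forall>k. 1 \<le> k \<and> k \<le> dt t \<longrightarrow> gp (idx n (st_s t) k) (wt t) < \<delta> (Lt t))"
proof (induction t)
  case 0
  then show ?case using run0 z0 n_pos by auto
next
  case (Suc t)
  then have I: "Lt t \<ge> 1" "wt t \<in> W" "st_s t \<in> {1..n}" "dt t < n"
    "\<And>k. 1 \<le> k \<Longrightarrow> k \<le> dt t \<Longrightarrow> gp (idx n (st_s t) k) (wt t) < \<delta> (Lt t)" by auto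
  from step[OF I(2,3)] show ?case
  proof (elim disjE conjE)
    assume "Lt (Suc t) = Lt t" "wt (Suc t) \<in> W" "st_s (Suc t) = nxt n (st_s t)" "dt (Suc t) = 0"
    then show ?case using I nxt_in n_pos by auto
  next
    assume "Lt (Suc t) = Suc (Lt t)" "wt (Suc t) = wt t" "st_s (Suc t) = 1" "dt (Suc t) = 0"
    then show ?case using I n_pos by auto
  next
    assume g: "gp (st_s t) (wt t) < \<delta> (Lt t)" and a: "dt t + 1 \<noteq> n" "Lt (Suc t) = Lt t" "wt (Suc t) = wt t"
       "st_s (Suc t) = nxt n (st_s t)" "dt (Suc t) = Suc (dt t)"
    have "gp (idx n (st_s (Suc t)) k) (wt (Suc t)) < \<delta> (Lt (Suc t))" if k: "1 \<le> k" "k \<le> dt (Suc t)" for k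
    proof -
      have "idx n (st_s (Suc t)) k = idx n (st_s t) (k - 1)"
        using a k I by (simp add: idx_nxt)
      then show ?thesis using k a g I(5)[of "k - 1"] idx0[OF I(3)]
        by (cases "k = 1") auto
    qed
    then show ?case using I a nxt_in by auto
  qed
qed

lemma restart:
  assumes "Lt (Suc t) \<noteq> Lt t"
  shows "Lt (Suc t) = Suc (Lt t) \<and> wt (Suc t) = wt t \<and> (\<forall>r\<in>{1..n}. gp r (wt t) < \<delta> (Lt t))"
proof -
  have I: "Lt t \<ge> 1" "wt t \<in> W" "st_s t \<in> {1..n}" "dt t < n"
    "\<And>k. 1 \<le> k \<Longrightarrow> k \<le> dt t \<Longrightarrow> gp (idx n (st_s t) k) (wt t) < \<delta> (Lt t)" using inv[of t] by auto
  from step[OF I(2,3)] assms have g: "gp (st_s t) (wt t) < \<delta> (Lt t)" and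
    a: "dt t + 1 = n" "Lt (Suc t) = Suc (Lt t)" "wt (Suc t) = wt t" by auto
  have "gp r (wt t) < \<delta> (Lt t)" if r: "r \<in> {1..n}" for r
  proof -
    obtain k where k: "k < n" "idx n (st_s t) k = r" using idx_cover[OF I(3) r] by blast
    show ?thesis
    proof (cases "k = 0")
      case True then show ?thesis using k g idx0[OF I(3)] by simp
    next
      case False then show ?thesis using k a I(5)[of k] by auto
    qed
  qed
  then show ?thesis using a by blast
qed

lemma L_mono: "Lt t \<le> Lt (Suc t) \<and> Lt (Suc t) \<le> Suc (Lt t)"
  using restart[of t] by (cases "Lt (Suc t) = Lt t") auto

lemma f_mono: "f (wt (Suc t)) \<le> f (wt t)"
proof -
  have I: "wt t \<in> W" "st_s t \<in> {1..n}" using inv[of t] by auto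
  have "0 \<le> cc (Lt t)" using \<beta> \<theta> \<delta> by (simp add: less_imp_le)
  then show ?thesis using step[OF I] by auto
qed


lemma f_antimono: "i \<le> j \<Longrightarrow> f (wt j) \<le> f (wt i)"
proof -
  have "decseq (\<lambda>t. f (wt t))" using f_mono by (intro decseq_SucI) auto
  then show "i \<le> j \<Longrightarrow> f (wt j) \<le> f (wt i)" by (simp add: decseq_def)
qed

lemma descent_block:
  assumes same: "\<forall>i\<le>n. Lt (t + i) = Lt t"
  shows "f (wt (t + n)) \<le> f (wt t) - cc (Lt t)"
proof (rule ccontr)
  assume nc: "\<not> ?thesis"
  have nd: "\<not> f (wt (t + i + 1)) \<le> f (wt (t + i)) - cc (Lt t)" if "i < n" for i
  proof
    assume h: "f (wt (t + i + 1)) \<le> f (wt (t + i)) - cc (Lt t)"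
    have "f (wt (t + n)) \<le> f (wt (t + i + 1))" using that by (intro f_antimono) auto
    moreover have "f (wt (t + i)) \<le> f (wt t)" by (intro f_antimono) auto
    ultimately show False using h nc by linarith
  qed
  have ds: "dt (t + i + 1) = Suc (dt (t + i))" if i: "i < n" for i
  proof -
    have I: "wt (t + i) \<in> W" "st_s (t + i) \<in> {1..n}" using inv[of "t + i"] by auto
    have L1a: "Lt (t + i) = Lt t" using same i by simp
    have "Lt (t + Suc i) = Lt t" using same i by (simp only: Suc_le_eq)
    then have L1: "Lt (t + i) = Lt t" "Lt (Suc (t + i)) = Lt t" using L1a by simp_all
    from step[OF I] L1 nd[OF i] show ?thesis by auto
  qed
  have "i \<le> n \<Longrightarrow> dt (t + i) = dt t + i" for i
    by (induction i) (use ds in auto)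
  then have "dt (t + n) = dt t + n" by simp
  moreover have "dt (t + n) < n" using inv[of "t + n"] by auto
  ultimately show False by simp
qed

lemma f_lower: "\<exists>m. \<forall>x\<in>W. m \<le> f x"
  using continuous_attains_inf[OF W_compact _ continuous_on_subset[OF f_cont]] z0 by blast

lemma reach: "\<exists>t. Lt t = Suc l"
proof (rule ccontr)
  assume nr: "\<not> ?thesis"
  have bnd: "Lt t \<le> l" for t
  proof (induction t)
    case 0
    have "Lt 0 = 1" using run0 by simp
    moreover have "l \<noteq> 0"
    proof
      assume "l = 0"
      then have "Lt 0 = Suc l" using \<open>Lt 0 = 1\<close> by simp
      then show False using nr by blast
    qed
    ultimately show ?case by simp
  next
    case (Suc t)
    have "Lt (Suc t) \<le> Suc l" using L_mono[of t] Suc by linarith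
    moreover have "Lt (Suc t) \<noteq> Suc l" using nr by blast
    ultimately show ?case by linarith
  qed
  have inc: "incseq Lt" using L_mono by (intro incseq_SucI) auto
  have sub: "range Lt \<subseteq> {..l}" using bnd by (simp add: image_subset_iff)
  have fin: "finite (range Lt)" by (rule finite_subset[OF sub]) simp
  have "Max (range Lt) \<in> range Lt" by (rule Max_in[OF fin]) simp
  then obtain T where T0: "Max (range Lt) = Lt T" by (rule rangeE)
  note T = T0[symmetric]
  have const: "Lt t = Lt T" if "T \<le> t" for t
  proof -
    have "Lt T \<le> Lt t" using inc that by (simp add: incseq_def)
    moreover have "Lt t \<le> Lt T" unfolding T by (rule Max_ge[OF fin]) simp
    ultimately show ?thesis by simp
  qed
  define c where "c = cc (Lt T)"
  have c: "0 < c" using \<beta> \<theta> \<delta> by (simp add: c_def)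
  have fk: "f (wt (T + k * n)) \<le> f (wt T) - real k * c" for k
  proof (induction k)
    case 0 then show ?case by simp
  next
    case (Suc k)
    have "\<forall>i\<le>n. Lt (T + k * n + i) = Lt (T + k * n)"
    proof (intro allI impI)
      fix i
      have "Lt (T + k * n + i) = Lt T" by (rule const) simp
      moreover have "Lt (T + k * n) = Lt T" by (rule const) simp
      ultimately show "Lt (T + k * n + i) = Lt (T + k * n)" by simp
    qed
    from descent_block[OF this] have "f (wt (T + k * n + n)) \<le> f (wt (T + k * n)) - c"
      using const[of "T + k * n", OF le_add1] by (simp add: c_def)
    then show ?case using Suc by (simp add: algebra_simps)
  qed
  obtain m where m: "\<forall>x\<in>W. m \<le> f x" using f_lower by blast
  obtain k :: nat where k: "(f (wt T) - m) / c < real k" using reals_Archimedean2 by blast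
  have "f (wt T) - m < real k * c" using k c by (simp add: pos_divide_less_eq)
  moreover have "m \<le> f (wt (T + k * n))" using m inv[of "T + k * n"] by auto
  ultimately show False using fk[of k] by linarith
qed

lemma z_W: "cpl_z st l \<in> W"
  unfolding cpl_z_def using inv by blast

lemma z_gap:
  assumes l: "1 \<le> l" and r: "r \<in> {1..n}"
  shows "gp r (cpl_z st l) < \<delta> l"
proof -
  define t0 where "t0 = (LEAST t. Lt t = Suc l)"
  have t0: "Lt t0 = Suc l" unfolding t0_def using reach[of l] by (rule LeastI_ex)
  have "Lt 0 = 1" using run0 by simp
  have "t0 \<noteq> 0"
  proof
    assume "t0 = 0"
    then have "Suc l = 1" using t0 \<open>Lt 0 = 1\<close> by simp
    then show False using l by simp
  qed
  then obtain t' where t': "t0 = Suc t'" by (cases t0) auto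
  have "Lt t' \<noteq> Suc l" using t' unfolding t0_def
    by (metis lessI not_less_Least t'[unfolded t0_def])
  then have ne: "Lt (Suc t') \<noteq> Lt t'" using t0 t' by simp
  from restart[OF ne] t0 t' have "Lt t' = l" "wt t0 = wt t'" "\<forall>r\<in>{1..n}. gp r (wt t') < \<delta> (Lt t')" by auto
  then show ?thesis using r unfolding cpl_z_def t0_def[symmetric] by auto
qed

lemma z_bound:
  assumes l: "1 \<le> l" and y: "y \<in> W"
  shows "f (cpl_z st l) \<le> f y + real n * \<delta> l"
proof -
  have "f (cpl_z st l) - f y \<le> (\<Sum>r=1..n. gp r (cpl_z st l))" by (rule sum_gap[OF z_W y])
  also have "\<dots> \<le> (\<Sum>r=1..n. \<delta> l)" using z_gap[OF l] by (intro sum_mono) (auto intro: less_imp_le)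
  finally show ?thesis by simp
qed

lemma final:
  shows "(\<forall>l. \<exists>t. fst (st t) = Suc l)
     \<and> (\<exists>x r. strict_mono r \<and> (cpl_z st \<circ> r) \<longlonglongrightarrow> x)
     \<and> (\<forall>x r. strict_mono r \<and> (cpl_z st \<circ> r) \<longlonglongrightarrow> x \<longrightarrow>
           x \<in> prodset blk n Wb \<and>
           (\<forall>y \<in> prodset blk n Wb. fobj mu eta blk n x \<le> fobj mu eta blk n y))
     \<and> (\<lambda>l. fobj mu eta blk n (cpl_z st l))
          \<longlonglongrightarrow> (INF y \<in> prodset blk n Wb. fobj mu eta blk n y)"
proof (intro conjI allI impI)
  show "\<exists>t. fst (st t) = Suc l" for l by (rule reach)
  show "\<exists>x r. strict_mono r \<and> (cpl_z st \<circ> r) \<longlonglongrightarrow> x"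
    using W_compact[unfolded compact_def, rule_format, of "cpl_z st"] z_W by blast
  have fc: "isCont f x" for x using f_cont by (simp add: continuous_on_eq_continuous_at)
  fix x r assume xr: "strict_mono r \<and> (cpl_z st \<circ> r) \<longlonglongrightarrow> x"
  show xW: "x \<in> W" using closed_sequentially[OF W_closed _ xr[THEN conjunct2]] z_W by auto
  show "\<forall>y\<in>W. f x \<le> f y"
  proof
    fix y assume y: "y \<in> W"
    have lim1: "(\<lambda>l. f ((cpl_z st \<circ> r) l)) \<longlonglongrightarrow> f x"
      using isCont_tendsto_compose[OF fc xr[THEN conjunct2]] .
    have "(\<delta> \<circ> r) \<longlonglongrightarrow> 0" using LIMSEQ_subseq_LIMSEQ[OF \<delta>(3)] xr by blast
    then have lim2: "(\<lambda>l. f y + real n * \<delta> (r l)) \<longlonglongrightarrow> f y + real n * 0"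
      by (intro tendsto_intros) (simp add: o_def)
    have ev: "\<forall>\<^sub>F l in sequentially. f ((cpl_z st \<circ> r) l) \<le> f y + real n * \<delta> (r l)"
    proof (rule eventually_sequentiallyI[of 1])
      fix l :: nat assume "1 \<le> l"
      then have "1 \<le> r l" using seq_suble[of r l] xr by auto
      then show "f ((cpl_z st \<circ> r) l) \<le> f y + real n * \<delta> (r l)" using z_bound y by simp
    qed
    from tendsto_le[OF _ lim2 lim1 ev] show "f x \<le> f y" by simp
  qed
next
  obtain ym where ym: "ym \<in> W" "\<forall>y\<in>W. f ym \<le> f y"
    using continuous_attains_inf[OF W_compact _ continuous_on_subset[OF f_cont]] z0 by blast
  have F: "(INF y\<in>W. f y) = f ym" using ym by (intro cInf_eq_minimum) auto
  have lim2: "(\<lambda>l. f ym + real n * \<delta> l) \<longlonglongrightarrow> f ym + real n * 0"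
    using \<delta>(3) by (intro tendsto_intros)
  show "(\<lambda>l. f (cpl_z st l)) \<longlonglongrightarrow> (INF y\<in>W. f y)"
    unfolding F
  proof (rule tendsto_sandwich[OF _ _ tendsto_const])
    show "\<forall>\<^sub>F l in sequentially. f ym \<le> f (cpl_z st l)" using ym z_W by auto
    show "\<forall>\<^sub>F l in sequentially. f (cpl_z st l) \<le> f ym + real n * \<delta> l"
      using z_bound ym by (intro eventually_sequentiallyI[of 1]) auto
    show "(\<lambda>l. f ym + real n * \<delta> l) \<longlonglongrightarrow> f ym" using lim2 by simp
  qed
qed

end


theorem proposition3p1:
  fixes mu :: "real^'m::finite \<Rightarrow> real" and mu' :: "real^'m \<Rightarrow> real^'m"
    and eta :: "nat \<Rightarrow> real^'m \<Rightarrow> real" and blk :: "'m \<Rightarrow> nat" and n :: nat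
    and Wb :: "nat \<Rightarrow> (real^'m) set" and \<beta> \<theta> :: real and \<delta> :: "nat \<Rightarrow> real"
    and z0 :: "real^'m" and st :: "nat \<Rightarrow> nat \<times> (real^'m) \<times> nat \<times> nat"
  assumes blk: "\<forall>i. blk i \<in> {1..n}"
    and Wb: "\<forall>s\<in>{1..n}. Wb s \<noteq> {} \<and> convex (Wb s) \<and> compact (Wb s) \<and> Wb s \<subseteq> bsub blk s"
    and mu_convex: "convex_on UNIV mu"
    and mu_grad: "\<forall>w. (mu has_derivative (\<lambda>h. inner (mu' w) h)) (at w)"
    and mu'_cont: "continuous_on UNIV mu'"
    and mu'_unif: "uniformly_continuous_on (prodset blk n Wb) mu'"
    and eta_convex: "\<forall>s\<in>{1..n}. convex_on (bsub blk s) (eta s)"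
    and z0: "z0 \<in> prodset blk n Wb"
    and \<beta>: "0 < \<beta>" "\<beta> < 1" and \<theta>: "0 < \<theta>" "\<theta> < 1"
    and \<delta>: "\<forall>l. 0 < \<delta> l" "decseq \<delta>" "\<delta> \<longlonglongrightarrow> 0"
    and run0: "st 0 = (1, z0, 1, 0)"
    and run: "\<forall>t. cpl_step mu mu' eta blk n Wb \<beta> \<theta> \<delta> (st t) (st (Suc t))"
  shows "(\<forall>l. \<exists>t. fst (st t) = Suc l)
     \<and> (\<exists>x r. strict_mono r \<and> (cpl_z st \<circ> r) \<longlonglongrightarrow> x)
     \<and> (\<forall>x r. strict_mono r \<and> (cpl_z st \<circ> r) \<longlonglongrightarrow> x \<longrightarrow>
           x \<in> prodset blk n Wb \<and>
           (\<forall>y \<in> prodset blk n Wb. fobj mu eta blk n x \<le> fobj mu eta blk n y))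
     \<and> (\<lambda>l. fobj mu eta blk n (cpl_z st l))
          \<longlonglongrightarrow> (INF y \<in> prodset blk n Wb. fobj mu eta blk n y)"
proof -
  interpret cpl_run mu mu' eta blk n Wb \<beta> \<theta> \<delta> z0 st
    by unfold_locales (use assms in auto)
  show ?thesis by (rule final)
qed

end
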